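(* Let $n \ge 2$ be an integer, $\lambda > 0$ a real number and $C \ge 1$. There exists a constant $C'>0$ depending only on $n$ and $C$ such that the following holds. Let $(p_0,\ldots,p_n) \in \mathbb{Z}^{n+1}$ with $q := p_0 \ge 1$, $C^{-1} q \le |p_i| \le C q$ for all $i$, and $|p_{i-1}p_{i+1} - p_i^2| \le C q^{1-\lambda}$ for all $i \in \{1,\ldots,n-1\}$. Then for all positive integers $m,k$ with $k-m+1 \ge 0$ and $k+m-1 \le n$, the $m\times m$ Hankel matrix $$\Delta_{m,k} = \begin{pmatrix} p_{k-m+1} & p_{k-m+2} & \cdots & p_k \\ p_{k-m+2} & p_{k-m+3} & \cdots & p_{k+1} \\ \vdots & \vdots & \ddots & \vdots \\ p_k & p_{k+1} & \cdots & p_{k+m-1}\end{pmatrix}$$ (whose $(r,s)$ entry is $p_{k-m+r+s-1}$) satisfies $|\det \Delta_{m,k}| \le C' q^{1-(m-1)\lambda}$.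
   Context: The paper writes these statements with Vinogradov notation ($\ll$, $\asymp$); here implied constants are made explicit. *)

theory Defs
  imports Complex_Main "Jordan_Normal_Form.Determinant"
begin

text \<open>The m x m Hankel matrix Delta_{m,k}: with 0-based indices r, s < m the (r,s)
  entry is p_{k-m+1+r+s} (the paper's 1-based entry p_{k-m+r+s-1}).
  Used only when k + 1 >= m.\<close>
definition hankel :: "(nat \<Rightarrow> int) \<Rightarrow> nat \<Rightarrow> nat \<Rightarrow> int mat" where
  "hankel p m k = mat m m (\<lambda>(r, s). p (k + 1 - m + r + s))"

end

theory Submission
  imports Defs
begin

lemma det_bound:
  fixes B :: "int mat"
  assumes B: "B \<in> carrier_mat m m"
    and bd: "\<And>i s. i < m \<Longrightarrow> s < m \<Longrightarrow> \<bar>real_of_int (B $$ (i, s))\<bar> \<le> g i"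
  shows "\<bar>real_of_int (det B)\<bar> \<le> fact m * (\<Prod>i = 0..<m. g i)"
proof -
  let ?P = "{p. p permutes {0..<m}}"
  have "real_of_int (det B) = (\<Sum>p\<in>?P. real_of_int (sign p) * (\<Prod>i = 0..<m. real_of_int (B $$ (i, p i))))"
    unfolding det_def'[OF B] by (simp add: of_int_sum of_int_prod)
  hence "\<bar>real_of_int (det B)\<bar> \<le> (\<Sum>p\<in>?P. \<bar>real_of_int (sign p) * (\<Prod>i = 0..<m. real_of_int (B $$ (i, p i)))\<bar>)"
    by (simp add: sum_abs)
  also have "\<dots> \<le> (\<Sum>p\<in>?P. (\<Prod>i = 0..<m. g i))"
  proof (rule sum_mono)
    fix p assume p: "p \<in> ?P"
    have "\<bar>real_of_int (sign p)\<bar> = 1" by (simp add: sign_def)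
    hence "\<bar>real_of_int (sign p) * (\<Prod>i = 0..<m. real_of_int (B $$ (i, p i)))\<bar>
        = (\<Prod>i = 0..<m. \<bar>real_of_int (B $$ (i, p i))\<bar>)" by (simp add: abs_mult abs_prod)
    also have "\<dots> \<le> (\<Prod>i = 0..<m. g i)"
    proof (rule prod_mono)
      fix i assume i: "i \<in> {0..<m}"
      have "p i < m" using p i by (auto dest: permutes_in_image)
      then show "0 \<le> \<bar>real_of_int (B $$ (i, p i))\<bar> \<and> \<bar>real_of_int (B $$ (i, p i))\<bar> \<le> g i"
        using bd i by auto
    qed
    finally show "\<bar>real_of_int (sign p) * (\<Prod>i = 0..<m. real_of_int (B $$ (i, p i)))\<bar> \<le> (\<Prod>i = 0..<m. g i)" .
  qed
  also have "\<dots> = fact m * (\<Prod>i = 0..<m. g i)"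
    by (simp add: card_permutations)
  finally show ?thesis .
qed

lemma ratio_bound:
  fixes p :: "nat \<Rightarrow> int" and C lam q :: real
  assumes q: "q = real_of_int (p 0)" "q > 0" and C: "C \<ge> 1"
    and low: "\<And>i. i \<le> n \<Longrightarrow> q / C \<le> \<bar>real_of_int (p i)\<bar>"
    and up: "\<And>i. i \<le> n \<Longrightarrow> \<bar>real_of_int (p i)\<bar> \<le> C * q"
    and e: "\<And>i. 1 \<le> i \<Longrightarrow> i \<le> n - 1 \<Longrightarrow>
        \<bar>real_of_int (p (i - 1) * p (i + 1) - p i ^ 2)\<bar> \<le> C * q powr (1 - lam)"
    and j: "j + 1 \<le> n"
  shows "\<bar>real_of_int (p 0 * p (j + 1) - p 1 * p j)\<bar> \<le> real j * C ^ 4 * q powr (1 - lam)"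
proof -
  define r where "r i = real_of_int (p (i + 1)) / real_of_int (p i)" for i
  have qC: "q / C > 0" using q C by simp
  have nz: "real_of_int (p i) \<noteq> 0" if "i \<le> n" for i
    using low[OF that] qC by auto
  let ?K = "C ^ 3 * q powr (1 - lam) / q ^ 2"
  have step: "\<bar>r (Suc i) - r i\<bar> \<le> ?K" if i: "i < j" for i
  proof -
    have i2: "i + 2 \<le> n" using i j by simp
    have n0: "real_of_int (p i) \<noteq> 0" "real_of_int (p (i+1)) \<noteq> 0"
      using nz i2 by auto
    have eq: "r (Suc i) - r i = real_of_int (p i * p (i + 2) - p (i + 1) ^ 2)
        / (real_of_int (p i) * real_of_int (p (i+1)))"
      unfolding r_def using n0 by (simp add: field_simps power2_eq_square)
    have ee: "\<bar>real_of_int (p i * p (i + 2) - p (i + 1) ^ 2)\<bar> \<le> C * q powr (1 - lam)"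
      using e[of "i+1"] i2 by (simp add: add.commute)
    have l1: "q / C \<le> \<bar>real_of_int (p i)\<bar>" "q / C \<le> \<bar>real_of_int (p (i+1))\<bar>"
      using low i2 by auto
    have den: "(q / C) * (q / C) \<le> \<bar>real_of_int (p i) * real_of_int (p (i+1))\<bar>"
      unfolding abs_mult using l1 qC by (intro mult_mono) auto
    have "\<bar>r (Suc i) - r i\<bar> = \<bar>real_of_int (p i * p (i + 2) - p (i + 1) ^ 2)\<bar>
        / \<bar>real_of_int (p i) * real_of_int (p (i+1))\<bar>" unfolding eq by (simp add: abs_divide)
    also have "\<dots> \<le> C * q powr (1 - lam) / ((q / C) * (q / C))"
      using ee den qC mult_pos_pos[OF qC qC] by (intro frac_le) auto
    also have "\<dots> = ?K" using C q by (simp add: field_simps power2_eq_square power3_eq_cube)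
    finally show ?thesis .
  qed
  have tel: "r j - r 0 = (\<Sum>i<j. r (Suc i) - r i)"
    by (simp add: sum_lessThan_telescope)
  have "\<bar>r j - r 0\<bar> \<le> (\<Sum>i<j. \<bar>r (Suc i) - r i\<bar>)" unfolding tel by (rule sum_abs)
  also have "\<dots> \<le> real j * ?K"
    using sum_bounded_above[of "{..<j}" "\<lambda>i. \<bar>r (Suc i) - r i\<bar>" ?K] step by simp
  finally have rb: "\<bar>r j - r 0\<bar> \<le> real j * ?K" .
  have nj: "real_of_int (p j) \<noteq> 0" using nz j by simp
  have n0: "real_of_int (p 0) \<noteq> 0" using nz by simp
  have feq: "real_of_int (p 0 * p (j + 1) - p 1 * p j) = q * real_of_int (p j) * (r j - r 0)"
    unfolding r_def q(1) using nj n0 by (simp add: field_simps)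
  have "\<bar>real_of_int (p 0 * p (j + 1) - p 1 * p j)\<bar> = q * (\<bar>real_of_int (p j)\<bar> * \<bar>r j - r 0\<bar>)"
    unfolding feq using q by (simp add: abs_mult)
  also have "\<dots> \<le> q * ((C * q) * (real j * ?K))"
    using up[of j] j rb q by (intro mult_left_mono mult_mono) auto
  also have "\<dots> = real j * C ^ 4 * q powr (1 - lam)"
    using q by (simp add: field_simps power2_eq_square power3_eq_cube power4_eq_xxxx)
  finally show ?thesis .
qed


lemma prod_if0: "0 < m \<Longrightarrow> (\<Prod>i = 0..<m. if i = 0 then x else y) = x * (y::'a::comm_monoid_mult) ^ (m - 1)"
proof (induction m)
  case 0 then show ?case by simp
next
  case (Suc m)
  show ?case
  proof (cases "m = 0")
    case True then show ?thesis by simp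
  next
    case False
    then have "(\<Prod>i = 0..<Suc m. if i = 0 then x else y) = (x * y ^ (m - 1)) * y"
      using Suc by (simp add: prod.atLeast0_lessThan_Suc)
    also have "\<dots> = x * y ^ (Suc m - 1)" using False
      by (cases m) (auto simp: mult_ac)
    finally show ?thesis .
  qed
qed

definition Lmat :: "int \<Rightarrow> int \<Rightarrow> nat \<Rightarrow> int mat" where
  "Lmat a b m = mat m m (\<lambda>(i, j). (if j = i then (if i = 0 then 1 else a) else 0) + (if j + 1 = i then - b else 0))"

lemma det_Lmat: "0 < m \<Longrightarrow> det (Lmat a b m) = a ^ (m - 1)"
proof -
  assume m: "0 < m"
  have "det (Lmat a b m) = prod_list (diag_mat (Lmat a b m))"
    by (rule det_lower_triangular[of m]) (auto simp: Lmat_def)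
  also have "\<dots> = (\<Prod>i = 0..<m. if i = 0 then 1 else a)"
    unfolding prod_list_diag_prod by (auto simp: Lmat_def intro: prod.cong)
  also have "\<dots> = a ^ (m - 1)" using prod_if0[OF m, of 1 a] by simp
  finally show ?thesis .
qed

lemma entry_LH:
  assumes i: "i < m" and s: "s < m"
  shows "(Lmat a b m * hankel p m k) $$ (i, s) =
    (if i = 0 then 1 else a) * p (k + 1 - m + i + s) + (if 1 \<le> i then - b * p (k + 1 - m + (i - 1) + s) else 0)"
proof -
  have "(Lmat a b m * hankel p m k) $$ (i, s) =
     (\<Sum>j\<in>{0..<m}. ((if j = i then (if i = 0 then 1 else a) else 0) + (if j + 1 = i then - b else 0)) * p (k + 1 - m + j + s))"
    using i s by (simp add: Lmat_def hankel_def scalar_prod_def)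
  also have "\<dots> = (\<Sum>j\<in>{0..<m}. (if j = i then (if i = 0 then 1 else a) * p (k + 1 - m + j + s) else 0))
      + (\<Sum>j\<in>{0..<m}. (if j + 1 = i then - b * p (k + 1 - m + j + s) else 0))"
    unfolding sum.distrib[symmetric] by (rule sum.cong) auto
  also have "(\<Sum>j\<in>{0..<m}. (if j = i then (if i = 0 then 1 else a) * p (k + 1 - m + j + s) else 0))
      = (if i = 0 then 1 else a) * p (k + 1 - m + i + s)" using i by (simp add: sum.delta')
  also have "(\<Sum>j\<in>{0..<m}. (if j + 1 = i then - b * p (k + 1 - m + j + s) else 0))
      = (\<Sum>j\<in>{0..<m}. (if j = i - 1 \<and> 1 \<le> i then - b * p (k + 1 - m + j + s) else 0))"
    by (rule sum.cong) auto
  also have "\<dots> = (if 1 \<le> i then - b * p (k + 1 - m + (i - 1) + s) else 0)"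
    using i by (cases "1 \<le> i") (simp_all add: sum.delta')
  finally show ?thesis .
qed


theorem proposition4p2:
  fixes n :: nat and C :: real
  assumes "n \<ge> 2" and "C \<ge> 1"
  shows "\<exists>C' > 0. \<forall>(lam::real) (p :: nat \<Rightarrow> int).
    lam > 0 \<longrightarrow> p 0 \<ge> 1 \<longrightarrow>
    (\<forall>i \<le> n. real_of_int (p 0) / C \<le> \<bar>real_of_int (p i)\<bar> \<and>
               \<bar>real_of_int (p i)\<bar> \<le> C * real_of_int (p 0)) \<longrightarrow>
    (\<forall>i. 1 \<le> i \<and> i \<le> n - 1 \<longrightarrow>
       \<bar>real_of_int (p (i - 1) * p (i + 1) - p i ^ 2)\<bar> \<le> C * real_of_int (p 0) powr (1 - lam)) \<longrightarrow>
    (\<forall>m k. 0 < m \<and> 0 < k \<and> m \<le> k + 1 \<and> k + m - 1 \<le> n \<longrightarrow>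
       \<bar>real_of_int (det (hankel p m k))\<bar> \<le> C' * real_of_int (p 0) powr (1 - real (m - 1) * lam))"
proof -
  have n2: "n \<ge> 2" and C1: "C \<ge> 1" using assms by auto
  define A where "A = real n * C ^ 4"
  have A1: "A \<ge> 1"
  proof -
    have "(1::real) \<le> C ^ 4" using C1 by simp
    moreover have "(1::real) \<le> real n" using n2 by simp
    ultimately show ?thesis unfolding A_def using one_le_mult_iff by (metis mult_mono' zero_le_one mult_1)
  qed
  define C' where "C' = fact n * C * A ^ n"
  have C'pos: "C' > 0" unfolding C'_def using C1 A1 by simp
  show ?thesis
  proof (intro exI[of _ C'] conjI allI impI C'pos)
    fix lam :: real and p :: "nat \<Rightarrow> int" and m k :: nat
    assume lam: "lam > 0" and p0: "p 0 \<ge> 1"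
      and bnd: "\<forall>i \<le> n. real_of_int (p 0) / C \<le> \<bar>real_of_int (p i)\<bar> \<and>
               \<bar>real_of_int (p i)\<bar> \<le> C * real_of_int (p 0)"
      and e: "\<forall>i. 1 \<le> i \<and> i \<le> n - 1 \<longrightarrow>
       \<bar>real_of_int (p (i - 1) * p (i + 1) - p i ^ 2)\<bar> \<le> C * real_of_int (p 0) powr (1 - lam)"
      and mk: "0 < m \<and> 0 < k \<and> m \<le> k + 1 \<and> k + m - 1 \<le> n"
    define q where "q = real_of_int (p 0)"
    have q0: "q > 0" unfolding q_def using p0 by simp
    have m0: "0 < m" using mk by simp
    define a where "a = k + 1 - m"
    define K where "K = A * q powr (1 - lam)"
    define g where "g i = (if i = 0 then C * q else K)" for i :: nat
    let ?H = "hankel p m k"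
    let ?L = "Lmat (p 0) (p 1) m"
    have H: "?H \<in> carrier_mat m m" by (simp add: hankel_def)
    have L: "?L \<in> carrier_mat m m" by (simp add: Lmat_def)
    have detB: "det (?L * ?H) = p 0 ^ (m - 1) * det ?H"
      using det_mult[OF L H] det_Lmat[OF m0] by simp
    have B: "?L * ?H \<in> carrier_mat m m" using L H by simp
    have ent: "\<bar>real_of_int ((?L * ?H) $$ (i, s))\<bar> \<le> g i" if i: "i < m" and s: "s < m" for i s
    proof (cases "i = 0")
      case True
      have "a + s \<le> n" using mk s unfolding a_def by linarith
      then show ?thesis using True entry_LH[OF i s, of "p 0" "p 1" p k] bnd
        unfolding g_def q_def a_def by auto
    next
      case False
      define j where "j = a + (i - 1) + s"
      have j1: "a + i + s = j + 1" unfolding j_def using False by simp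
      have jn: "j + 1 \<le> n" using mk s i j1 unfolding a_def by linarith
      have eq: "(?L * ?H) $$ (i, s) = p 0 * p (j + 1) - p 1 * p j"
        using entry_LH[OF i s, of "p 0" "p 1" p k] False j1 unfolding a_def j_def by simp
      have "\<bar>real_of_int (p 0 * p (j + 1) - p 1 * p j)\<bar> \<le> real j * C ^ 4 * q powr (1 - lam)"
        by (rule ratio_bound[of q p C n lam j]) (use q0 C1 bnd e jn in \<open>auto simp: q_def\<close>)
      also have "\<dots> \<le> real n * C ^ 4 * q powr (1 - lam)"
        using jn by (intro mult_right_mono) auto
      finally show ?thesis unfolding eq g_def K_def A_def using False by simp
    qed
    have "\<bar>real_of_int (det (?L * ?H))\<bar> \<le> fact m * (\<Prod>i = 0..<m. g i)"
      by (rule det_bound[OF B ent])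
    also have "(\<Prod>i = 0..<m. g i) = C * q * K ^ (m - 1)"
      unfolding g_def by (rule prod_if0[OF m0])
    finally have b1: "q ^ (m - 1) * \<bar>real_of_int (det ?H)\<bar> \<le> fact m * (C * q * K ^ (m - 1))"
      unfolding detB using q0 by (simp add: abs_mult q_def)
    have Kp: "K ^ (m - 1) = A ^ (m - 1) * q powr (real (m - 1) * (1 - lam))"
      unfolding K_def using q0 by (simp add: power_mult_distrib powr_power)
    have qp: "q * q powr (real (m - 1) * (1 - lam)) = q ^ (m - 1) * q powr (1 - real (m - 1) * lam)"
    proof -
      have "q * q powr (real (m - 1) * (1 - lam)) = q powr (real (m - 1) + (1 - real (m - 1) * lam))"
        using q0 by (simp add: powr_mult_base algebra_simps)
      also have "\<dots> = q ^ (m - 1) * q powr (1 - real (m - 1) * lam)"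
        using q0 by (simp add: powr_add powr_realpow)
      finally show ?thesis .
    qed
    have "q ^ (m - 1) * \<bar>real_of_int (det ?H)\<bar> \<le> q ^ (m - 1) * (fact m * C * A ^ (m - 1) * q powr (1 - real (m - 1) * lam))"
    proof -
      have "fact m * (C * q * K ^ (m - 1)) = fact m * C * A ^ (m - 1) * (q * q powr (real (m - 1) * (1 - lam)))"
        unfolding Kp by (simp only: mult_ac)
      also have "\<dots> = q ^ (m - 1) * (fact m * C * A ^ (m - 1) * q powr (1 - real (m - 1) * lam))"
        unfolding qp by (simp only: mult_ac)
      finally have "fact m * (C * q * K ^ (m - 1)) = q ^ (m - 1) * (fact m * C * A ^ (m - 1) * q powr (1 - real (m - 1) * lam))" .
      then show ?thesis using b1 by linarith
    qed
    hence b2: "\<bar>real_of_int (det ?H)\<bar> \<le> fact m * C * A ^ (m - 1) * q powr (1 - real (m - 1) * lam)"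
      using q0 by simp
    have "fact m * C * A ^ (m - 1) \<le> C'"
    proof -
      have "m \<le> n" using mk by linarith
      hence f: "(fact m :: real) \<le> fact n" by (rule fact_mono)
      have "A ^ (m - 1) \<le> A ^ n" using A1 \<open>m \<le> n\<close> by (intro power_increasing) auto
      then show ?thesis unfolding C'_def using f C1 A1
        by (intro mult_mono) auto
    qed
    then show "\<bar>real_of_int (det ?H)\<bar> \<le> C' * real_of_int (p 0) powr (1 - real (m - 1) * lam)"
      using b2 unfolding q_def[symmetric] by (meson order_trans mult_right_mono powr_ge_zero)
  qed
qed

end
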